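(* Let $X$ be a nontrivial real Hausdorff locally convex space, let $g\in\Gamma(X)$ be sublinear and let $x^{\ast}\in X^{\ast}$. Set $L_{x^{\ast}}:=\{x\in X: g(x)=\langle x,x^{\ast}\rangle,\ g(-x)=-\langle x,x^{\ast}\rangle\}$. The following assertions are equivalent: (a) $x^{\ast}\in\operatorname{qri}\partial g(0)$; (b) $[g\le x^{\ast}]$ is a linear space; (b') $L_{x^{\ast}}=[g\le x^{\ast}]$; (c) $x^{\ast}\in\partial g(0)$ and $[g=x^{\ast}]$ is a linear space; (c') $x^{\ast}\in\partial g(0)$ and $L_{x^{\ast}}=[g=x^{\ast}]$.
   Context: $X^{\ast}$ is the topological dual of $X$ endowed with the weak$^{\ast}$ topology; closures in $X^{\ast}$ are weak$^{\ast}$ closures; $\langle x,x^{\ast}\rangle:=x^{\ast}(x)$. $\Gamma(X)$ is the set of proper lower semicontinuous convex functions $X\to\mathbb{R}\cup\{\pm\infty\}$. $\partial g(0)=\{x^{\ast}:\langle x',x^{\ast}\rangle\le g(x')\ \forall x'\in X\}$. $[g\le x^{\ast}]:=\{x\in X: g(x)\le\langle x,x^{\ast}\rangle\}$, $[g=x^{\ast}]:=\{x\in X: g(x)=\langle x,x^{\ast}\rangle\}$. For convex $B\subset X^{\ast}$, $\operatorname{qri}B=\{b\in B:\overline{\mathbb{R}_+(B-b)}\text{ is a linear subspace}\}$. *)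

theory Defs
  imports "HOL-Analysis.Analysis"
begin

definition locally_convex_tvs :: "'a::{real_vector,t2_space} itself \<Rightarrow> bool" where
  "locally_convex_tvs _ \<longleftrightarrow>
     continuous_on (UNIV :: ('a \<times> 'a) set) (\<lambda>(x, y). x + y) \<and>
     continuous_on (UNIV :: (real \<times> 'a) set) (\<lambda>(t, x). t *\<^sub>R x) \<and>
     (\<forall>U::'a set. open U \<and> 0 \<in> U \<longrightarrow> (\<exists>V. open V \<and> convex V \<and> 0 \<in> V \<and> V \<subseteq> U))"

definition topdual :: "('a::{real_vector,topological_space} \<Rightarrow> real) set" where
  "topdual = {f. linear f \<and> continuous_on UNIV f}"

text \<open>Weak-star closure in the dual: the weak-star topology on the dual is the subspace
  topology induced by the product (pointwise convergence) topology on functions.\<close>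
definition wstar_closure :: "('a::{real_vector,topological_space} \<Rightarrow> real) set \<Rightarrow> ('a \<Rightarrow> real) set" where
  "wstar_closure B = topdual \<inter> closure B"

definition fun_subspace :: "('a \<Rightarrow> real) set \<Rightarrow> bool" where
  "fun_subspace S \<longleftrightarrow> (\<lambda>x. 0) \<in> S \<and> (\<forall>f\<in>S. \<forall>h\<in>S. (\<lambda>x. f x + h x) \<in> S)
      \<and> (\<forall>c. \<forall>f\<in>S. (\<lambda>x. c * f x) \<in> S)"

definition qri :: "('a::{real_vector,topological_space} \<Rightarrow> real) set \<Rightarrow> ('a \<Rightarrow> real) set" where
  "qri B = {b \<in> B. fun_subspace (wstar_closure {(\<lambda>x. t * (y x - b x)) | t y. t \<ge> 0 \<and> y \<in> B})}"

definition proper_fun :: "('a \<Rightarrow> ereal) \<Rightarrow> bool" where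
  "proper_fun g \<longleftrightarrow> (\<forall>x. g x \<noteq> -\<infinity>) \<and> (\<exists>x. g x \<noteq> \<infinity>)"

definition lsc_fun :: "('a::topological_space \<Rightarrow> ereal) \<Rightarrow> bool" where
  "lsc_fun g \<longleftrightarrow> (\<forall>c::real. closed {x. g x \<le> ereal c})"

definition convex_efun :: "('a::real_vector \<Rightarrow> ereal) \<Rightarrow> bool" where
  "convex_efun g \<longleftrightarrow> convex {(x, r::real). g x \<le> ereal r}"

definition Gamma :: "('a::{real_vector,topological_space} \<Rightarrow> ereal) set" where
  "Gamma = {g. proper_fun g \<and> lsc_fun g \<and> convex_efun g}"

definition sublinear_efun :: "('a::real_vector \<Rightarrow> ereal) \<Rightarrow> bool" where
  "sublinear_efun g \<longleftrightarrow> (\<forall>x y. g (x + y) \<le> g x + g y)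
     \<and> (\<forall>t::real. \<forall>x. t > 0 \<longrightarrow> g (t *\<^sub>R x) = ereal t * g x)"

definition subdiff0 :: "('a::{real_vector,topological_space} \<Rightarrow> ereal) \<Rightarrow> ('a \<Rightarrow> real) set" where
  "subdiff0 g = {xs \<in> topdual. \<forall>x. ereal (xs x) \<le> g x}"

definition le_set :: "('a \<Rightarrow> ereal) \<Rightarrow> ('a \<Rightarrow> real) \<Rightarrow> 'a set" where
  "le_set g xs = {x. g x \<le> ereal (xs x)}"

definition eq_set :: "('a \<Rightarrow> ereal) \<Rightarrow> ('a \<Rightarrow> real) \<Rightarrow> 'a set" where
  "eq_set g xs = {x. g x = ereal (xs x)}"

definition Lset :: "('a::real_vector \<Rightarrow> ereal) \<Rightarrow> ('a \<Rightarrow> real) \<Rightarrow> 'a set" where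
  "Lset g xs = {x. g x = ereal (xs x) \<and> g (- x) = ereal (- xs x)}"

end

theory Submission
  imports Defs
begin

definition sublin :: "('a::real_vector \<Rightarrow> real) \<Rightarrow> bool" where
  "sublin p \<longleftrightarrow> (\<forall>x y. p (x + y) \<le> p x + p y) \<and> (\<forall>t x. t > 0 \<longrightarrow> p (t *\<^sub>R x) = t * p x)"

lemma sublin_add: "sublin p \<Longrightarrow> p (x + y) \<le> p x + p y"
  by (simp add: sublin_def)

lemma sublin_scale: "sublin p \<Longrightarrow> t > 0 \<Longrightarrow> p (t *\<^sub>R x) = t * p x"
  by (simp add: sublin_def)

lemma sublin_0: "sublin p \<Longrightarrow> p 0 = 0"
  using sublin_scale[of p 2 0] by simp

lemma sublin_scale0: "sublin p \<Longrightarrow> t \<ge> 0 \<Longrightarrow> p (t *\<^sub>R x) = t * p x"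
  by (cases "t = 0") (auto simp: sublin_0 sublin_scale)

lemma sublin_neg: "sublin p \<Longrightarrow> - p (- x) \<le> p x"
  using sublin_add[of p x "-x"] sublin_0[of p] by simp

definition Tdir :: "'a::real_vector \<Rightarrow> ('a \<Rightarrow> real) \<Rightarrow> 'a \<Rightarrow> real" where
  "Tdir x p y = Inf ((\<lambda>t. p (y + t *\<^sub>R x) - t * p x) ` {0..})"

lemma Tdir_bdd:
  assumes "sublin p"
  shows "bdd_below ((\<lambda>t. p (y + t *\<^sub>R x) - t * p x) ` {0..})"
proof (rule bdd_belowI2)
  fix t :: real assume "t \<in> {0..}"
  then have "p (t *\<^sub>R x) = t * p x" using sublin_scale0[OF assms] by simp
  moreover have "p (t *\<^sub>R x) \<le> p (y + t *\<^sub>R x) + p (-y)"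
    using sublin_add[OF assms, of "y + t *\<^sub>R x" "-y"] by simp
  ultimately show "- p (-y) \<le> p (y + t *\<^sub>R x) - t * p x" by simp
qed

lemma Tdir_le_elem:
  assumes "sublin p" "t \<ge> 0"
  shows "Tdir x p y \<le> p (y + t *\<^sub>R x) - t * p x"
  unfolding Tdir_def using assms by (intro cInf_lower Tdir_bdd) auto

lemma Tdir_ge:
  assumes "\<And>t. t \<ge> 0 \<Longrightarrow> c \<le> p (y + t *\<^sub>R x) - t * p x"
  shows "c \<le> Tdir x p y"
  unfolding Tdir_def using assms by (intro cInf_greatest) auto

lemma Tdir_le: "sublin p \<Longrightarrow> Tdir x p y \<le> p y"
  using Tdir_le_elem[of p 0 x y] by simp

lemma Tdir_neg: "sublin p \<Longrightarrow> Tdir x p (-x) \<le> - p x"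
  using Tdir_le_elem[of p 1 x "-x"] sublin_0[of p] by simp

lemma Tdir_sublin:
  assumes p: "sublin p"
  shows "sublin (Tdir x p)"
  unfolding sublin_def
proof (intro conjI allI impI)
  fix y1 y2
  have "Tdir x p (y1 + y2) - Tdir x p y2 \<le> Tdir x p y1"
  proof (rule Tdir_ge)
    fix t1 :: real assume t1: "t1 \<ge> 0"
    have "Tdir x p (y1 + y2) - (p (y1 + t1 *\<^sub>R x) - t1 * p x) \<le> Tdir x p y2"
    proof (rule Tdir_ge)
      fix t2 :: real assume t2: "t2 \<ge> 0"
      have "Tdir x p (y1 + y2) \<le> p ((y1 + y2) + (t1 + t2) *\<^sub>R x) - (t1 + t2) * p x"
        using Tdir_le_elem[OF p, of "t1 + t2"] t1 t2 by simp
      also have "(y1 + y2) + (t1 + t2) *\<^sub>R x = (y1 + t1 *\<^sub>R x) + (y2 + t2 *\<^sub>R x)"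
        by (simp add: algebra_simps)
      also have "p \<dots> \<le> p (y1 + t1 *\<^sub>R x) + p (y2 + t2 *\<^sub>R x)"
        using sublin_add[OF p] by blast
      finally show "Tdir x p (y1 + y2) - (p (y1 + t1 *\<^sub>R x) - t1 * p x) \<le> p (y2 + t2 *\<^sub>R x) - t2 * p x"
        by (simp add: algebra_simps)
    qed
    then show "Tdir x p (y1 + y2) - Tdir x p y2 \<le> p (y1 + t1 *\<^sub>R x) - t1 * p x" by simp
  qed
  then show "Tdir x p (y1 + y2) \<le> Tdir x p y1 + Tdir x p y2" by simp
next
  fix c :: real and y assume c: "c > 0"
  have A: "Tdir x p (c *\<^sub>R y) \<le> c * Tdir x p y"
  proof -
    have "Tdir x p (c *\<^sub>R y) / c \<le> Tdir x p y"
    proof (rule Tdir_ge)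
      fix t :: real assume t: "t \<ge> 0"
      have "Tdir x p (c *\<^sub>R y) \<le> p (c *\<^sub>R y + (c * t) *\<^sub>R x) - (c * t) * p x"
        using Tdir_le_elem[OF p, of "c * t"] t c by simp
      also have "c *\<^sub>R y + (c * t) *\<^sub>R x = c *\<^sub>R (y + t *\<^sub>R x)" by (simp add: algebra_simps)
      also have "p \<dots> = c * p (y + t *\<^sub>R x)" using sublin_scale[OF p c] by simp
      finally show "Tdir x p (c *\<^sub>R y) / c \<le> p (y + t *\<^sub>R x) - t * p x"
        using c by (simp add: field_simps)
    qed
    then show ?thesis using c by (simp add: field_simps)
  qed
  have B: "c * Tdir x p y \<le> Tdir x p (c *\<^sub>R y)"
  proof -
    have "c * Tdir x p y \<le> p (c *\<^sub>R y + t *\<^sub>R x) - t * p x" if t: "t \<ge> 0" for t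
    proof -
      have "Tdir x p y \<le> p (y + (t / c) *\<^sub>R x) - (t / c) * p x"
        using Tdir_le_elem[OF p, of "t / c"] t c by simp
      also have "y + (t / c) *\<^sub>R x = (1 / c) *\<^sub>R (c *\<^sub>R y + t *\<^sub>R x)"
        using c by (simp add: algebra_simps)
      also have "p \<dots> = (1 / c) * p (c *\<^sub>R y + t *\<^sub>R x)" using sublin_scale[OF p] c by simp
      finally show ?thesis using c by (simp add: field_simps)
    qed
    then show ?thesis by (rule Tdir_ge)
  qed
  from A B show "Tdir x p (c *\<^sub>R y) = c * Tdir x p y" by simp
qed

lemma sublin_minimal_linear:
  assumes p: "sublin p" and min: "\<And>x. Tdir x p = p"
  shows "linear p"
proof -
  have neg: "p (- x) = - p x" for x
    using Tdir_neg[OF p, of x] min[of x] sublin_neg[OF p, of x] by simp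
  show ?thesis
  proof (rule linearI)
    fix x y
    have "p (x + y) \<le> p x + p y" using sublin_add[OF p] .
    moreover have "p (-x + -y) \<le> p (-x) + p (-y)" using sublin_add[OF p] .
    ultimately show "p (x + y) = p x + p y" using neg[of "x+y"] neg[of x] neg[of y] by simp
  next
    fix c :: real and x
    show "p (c *\<^sub>R x) = c *\<^sub>R p x"
    proof (cases "c \<ge> 0")
      case True then show ?thesis using sublin_scale0[OF p] by simp
    next
      case False
      then have "p (c *\<^sub>R x) = p (- ((-c) *\<^sub>R x))" by simp
      also have "\<dots> = - ((-c) * p x)" using neg sublin_scale0[OF p, of "-c" x] False by simp
      finally show ?thesis by simp
    qed
  qed
qed

lemma sublin_lower: "sublin p \<Longrightarrow> (\<And>x. p x \<le> q x) \<Longrightarrow> - q (- x) \<le> p x"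
  using sublin_neg[of p x] by (smt (verit))

lemma HB_analytic:
  fixes q :: "'a::real_vector \<Rightarrow> real"
  assumes q: "sublin q"
  shows "\<exists>l. linear l \<and> (\<forall>x. l x \<le> q x) \<and> q z \<le> l z"
proof -
  define q1 where "q1 = Tdir z q"
  have q1: "sublin q1" unfolding q1_def using Tdir_sublin[OF q] .
  define A where "A = {p. sublin p \<and> (\<forall>x. p x \<le> q1 x)}"
  define P where "P = (\<lambda>a b :: 'a \<Rightarrow> real. \<forall>x. b x \<le> a x)"
  have po: "partial_order_on A (relation_of P A)"
    by (rule partial_order_on_relation_ofI) (auto simp: P_def fun_eq_iff intro: order.trans order.antisym)
  have ch: "\<exists>u \<in> A. \<forall>a \<in> C. P a u" if C: "C \<in> Chains (relation_of P A)" for C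
  proof (cases "C = {}")
    case True
    then show ?thesis using q1 by (auto simp: A_def)
  next
    case False
    have CA: "C \<subseteq> A" using C False unfolding Chains_def relation_of_def by auto
    have comp: "P a b \<or> P b a" if "a \<in> C" "b \<in> C" for a b
      using C that unfolding Chains_def relation_of_def by auto
    define u where "u = (\<lambda>x. Inf ((\<lambda>p. p x) ` C))"
    have bdd: "bdd_below ((\<lambda>p. p x) ` C)" for x
    proof (rule bdd_belowI2)
      fix p assume "p \<in> C"
      then have "p \<in> A" using CA by auto
      then show "- q1 (- x) \<le> p x" unfolding A_def using sublin_lower by blast
    qed
    have ule: "u x \<le> p x" if "p \<in> C" for p x
      unfolding u_def using bdd that by (intro cInf_lower) auto
    have uge: "c \<le> u x" if "\<And>p. p \<in> C \<Longrightarrow> c \<le> p x" for c x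
      unfolding u_def using False that by (intro cInf_greatest) auto
    have "sublin u"
      unfolding sublin_def
    proof (intro conjI allI impI)
      fix x y
      have "u (x + y) - u y \<le> u x"
      proof (rule uge)
        fix p1 assume p1: "p1 \<in> C"
        have "u (x + y) - p1 x \<le> u y"
        proof (rule uge)
          fix p2 assume p2: "p2 \<in> C"
          have s1: "sublin p1" "sublin p2" using p1 p2 CA by (auto simp: A_def)
          show "u (x + y) - p1 x \<le> p2 y"
          proof (cases "P p1 p2")
            case True
            then have "u (x + y) \<le> p2 x + p2 y" using ule[OF p2] sublin_add[OF s1(2)] by (smt (verit))
            then show ?thesis using True unfolding P_def by (smt (verit))
          next
            case False
            then have "P p2 p1" using comp[OF p1 p2] by auto
            then have "u (x + y) \<le> p1 x + p1 y" using ule[OF p1] sublin_add[OF s1(1)] by (smt (verit))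
            then show ?thesis using \<open>P p2 p1\<close> unfolding P_def by (smt (verit))
          qed
        qed
        then show "u (x + y) - u y \<le> p1 x" by simp
      qed
      then show "u (x + y) \<le> u x + u y" by simp
    next
      fix t :: real and x assume t: "t > 0"
      have s: "sublin p" if "p \<in> C" for p using that CA by (auto simp: A_def)
      have "u (t *\<^sub>R x) \<le> t * u x"
      proof -
        have "u (t *\<^sub>R x) / t \<le> u x"
        proof (rule uge)
          fix p assume "p \<in> C"
          then show "u (t *\<^sub>R x) / t \<le> p x"
            using ule[of p "t *\<^sub>R x"] sublin_scale[OF s t] t by (simp add: field_simps)
        qed
        then show ?thesis using t by (simp add: field_simps)
      qed
      moreover have "t * u x \<le> u (t *\<^sub>R x)"
      proof (rule uge)
        fix p assume "p \<in> C"
        then show "t * u x \<le> p (t *\<^sub>R x)"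
          using ule[of p x] sublin_scale[OF s[OF \<open>p \<in> C\<close>] t] t by simp
      qed
      ultimately show "u (t *\<^sub>R x) = t * u x" by simp
    qed
    moreover obtain p0 where "p0 \<in> C" using False by auto
    then have "u x \<le> q1 x" for x
    proof -
      have "p0 x \<le> q1 x" using \<open>p0 \<in> C\<close> CA by (auto simp: A_def)
      then show ?thesis using ule[OF \<open>p0 \<in> C\<close>, of x] by simp
    qed
    ultimately have "u \<in> A" by (simp add: A_def)
    then show ?thesis using ule unfolding P_def by blast
  qed
  obtain m where mA: "m \<in> A" and mmin: "\<And>a. a \<in> A \<Longrightarrow> P m a \<Longrightarrow> a = m"
    using predicate_Zorn[OF po ch] by blast
  have ms: "sublin m" and mq1: "\<And>x. m x \<le> q1 x" using mA by (auto simp: A_def)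
  have "Tdir x m = m" for x
  proof (rule mmin)
    show "Tdir x m \<in> A" unfolding A_def
      using Tdir_sublin[OF ms] Tdir_le[OF ms] mq1 by (simp add: order.trans[OF Tdir_le[OF ms] mq1])
    show "P m (Tdir x m)" unfolding P_def using Tdir_le[OF ms] by auto
  qed
  then have lin: "linear m" using sublin_minimal_linear[OF ms] by blast
  have "m x \<le> q x" for x using mq1[of x] Tdir_le[OF q, of z x] unfolding q1_def by simp
  moreover have "m (-z) \<le> - q z" using mq1[of "-z"] Tdir_neg[OF q, of z] unfolding q1_def by simp
  then have "q z \<le> m z" using linear_neg[OF lin, of z] by simp
  ultimately show ?thesis using lin by blast
qed

lemma lcs_add_cont:
  assumes "locally_convex_tvs TYPE('a::{real_vector,t2_space})"
  shows "continuous_on UNIV (\<lambda>x::'a. x + a)"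
proof -
  have c: "continuous_on UNIV (\<lambda>(x, y). x + y :: 'a)"
    using assms by (simp add: locally_convex_tvs_def)
  have "continuous_on UNIV (\<lambda>x::'a. (x, a))"
    by (intro continuous_intros)
  from continuous_on_compose[OF this continuous_on_subset[OF c]]
  show ?thesis by (simp add: o_def)
qed

lemma lcs_scale_cont:
  assumes "locally_convex_tvs TYPE('a::{real_vector,t2_space})"
  shows "continuous_on UNIV (\<lambda>x::'a. c *\<^sub>R x)"
proof -
  have c: "continuous_on UNIV (\<lambda>(t, x). t *\<^sub>R x :: 'a)"
    using assms by (simp add: locally_convex_tvs_def)
  have "continuous_on UNIV (\<lambda>x::'a. (c, x))"
    by (intro continuous_intros)
  from continuous_on_compose[OF this continuous_on_subset[OF c]]
  show ?thesis by (simp add: o_def)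
qed

lemma lcs_scale_cont2:
  assumes "locally_convex_tvs TYPE('a::{real_vector,t2_space})"
  shows "continuous_on UNIV (\<lambda>t::real. t *\<^sub>R (a::'a))"
proof -
  have c: "continuous_on UNIV (\<lambda>(t, x). t *\<^sub>R x :: 'a)"
    using assms by (simp add: locally_convex_tvs_def)
  have "continuous_on UNIV (\<lambda>t::real. (t, a))"
    by (intro continuous_intros)
  from continuous_on_compose[OF this continuous_on_subset[OF c]]
  show ?thesis by (simp add: o_def)
qed

lemma open_vimage_UNIV: "continuous_on UNIV f \<Longrightarrow> open B \<Longrightarrow> open (f -` B)"
  using continuous_on_open_vimage[of UNIV f] by auto

lemma lcs_absorb:
  assumes "locally_convex_tvs TYPE('a::{real_vector,t2_space})" "open W" "(0::'a) \<in> W"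
  shows "\<exists>e>0. \<forall>t. \<bar>t\<bar> < e \<longrightarrow> t *\<^sub>R a \<in> W"
proof -
  have "open ((\<lambda>t::real. t *\<^sub>R a) -` W)"
    using open_vimage_UNIV[OF lcs_scale_cont2[OF assms(1)] assms(2)] .
  moreover have "0 \<in> (\<lambda>t::real. t *\<^sub>R a) -` W" using assms(3) by simp
  ultimately obtain e where "e > 0" "ball 0 e \<subseteq> (\<lambda>t::real. t *\<^sub>R a) -` W"
    using open_contains_ball by blast
  then show ?thesis by (intro exI[of _ e]) (auto simp: subset_iff dist_real_def)
qed

lemma lcs_absorb2:
  assumes "locally_convex_tvs TYPE('a::{real_vector,t2_space})" "open W" "(0::'a) \<in> W"
  shows "\<exists>a>0. (1 / a) *\<^sub>R x \<in> W"
proof -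
  obtain e where e: "e > 0" "\<And>t. \<bar>t\<bar> < e \<Longrightarrow> t *\<^sub>R x \<in> W"
    using lcs_absorb[OF assms] by blast
  have "(1 / (2 / e)) *\<^sub>R x \<in> W" using e by (intro e(2)) auto
  moreover have "2 / e > 0" using e by simp
  ultimately show ?thesis by blast
qed

lemma lcs_linear_cont:
  fixes l :: "'a::{real_vector,t2_space} \<Rightarrow> real"
  assumes lcs: "locally_convex_tvs TYPE('a)" and l: "linear l"
    and N: "open N" "0 \<in> N" and bnd: "\<And>w. w \<in> N \<Longrightarrow> \<bar>l w\<bar> \<le> M"
  shows "continuous_on UNIV l"
proof -
  have M: "M \<ge> 0" using bnd[OF N(2)] by simp
  have "open (l -` B)" if B: "open B" for B
  proof (subst open_subopen, intro ballI)
    fix x0 assume "x0 \<in> l -` B"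
    then obtain e where e: "e > 0" "ball (l x0) e \<subseteq> B"
      using B open_contains_ball by blast
    define c where "c = (M + 1) / e"
    have c: "c > 0" using M e by (simp add: c_def)
    define T where "T = (\<lambda>x. x + (- x0)) -` ((\<lambda>x. c *\<^sub>R x) -` N)"
    have "open T" unfolding T_def
      by (intro open_vimage_UNIV lcs_scale_cont lcs_add_cont lcs N)
    moreover have "x0 \<in> T" using N(2) by (simp add: T_def)
    moreover have "T \<subseteq> l -` B"
    proof
      fix x assume "x \<in> T"
      then have "c *\<^sub>R (x - x0) \<in> N" by (simp add: T_def)
      then have "\<bar>l (c *\<^sub>R (x - x0))\<bar> \<le> M" by (rule bnd)
      then have "c * \<bar>l x - l x0\<bar> \<le> M"
        using c by (simp add: linear_scale[OF l] linear_diff[OF l] abs_mult)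
      then have "\<bar>l x - l x0\<bar> \<le> M / c" using c by (simp add: field_simps)
      also have "M / c < e" using e M by (simp add: c_def field_simps)
      finally have "l x \<in> ball (l x0) e" by (simp add: dist_real_def abs_minus_commute)
      then show "x \<in> l -` B" using e by auto
    qed
    ultimately show "\<exists>T. open T \<and> x0 \<in> T \<and> T \<subseteq> l -` B" by blast
  qed
  then show ?thesis using continuous_on_open_vimage[of UNIV l] by auto
qed

lemma sublin_efun_g0:
  fixes g :: "'a::{real_vector,t2_space} \<Rightarrow> ereal"
  assumes lcs: "locally_convex_tvs TYPE('a)"
   and gG: "g \<in> Gamma" and sl: "sublinear_efun g"
  shows "g 0 = 0"
proof -
  have ninf: "\<And>x. g x \<noteq> -\<infinity>" and "\<exists>x. g x \<noteq> \<infinity>"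
    using gG by (auto simp: Gamma_def proper_fun_def)
  then obtain x0 where "g x0 \<noteq> \<infinity>" by blast
  then obtain c0 where c0: "g x0 = ereal c0" using ninf[of x0] by (cases "g x0") auto
  have cl: "closed {x. g x \<le> ereal \<bar>c0\<bar>}" using gG by (auto simp: Gamma_def lsc_fun_def)
  have "0 \<in> {x. g x \<le> ereal \<bar>c0\<bar>}"
  proof (rule Lim_in_closed_set[OF cl])
    show "eventually (\<lambda>n. inverse (real (Suc n)) *\<^sub>R x0 \<in> {x. g x \<le> ereal \<bar>c0\<bar>}) sequentially"
    proof (rule always_eventually, rule allI)
      fix n
      define t where "t = inverse (real (Suc n))"
      have t: "t > 0" "t \<le> 1" by (auto simp: t_def field_simps)
      have "g (t *\<^sub>R x0) = ereal (t * c0)"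
        using sl t c0 by (simp add: sublinear_efun_def)
      moreover have "t * c0 \<le> \<bar>c0\<bar>"
      proof -
        have "t * c0 \<le> t * \<bar>c0\<bar>" using t by (intro mult_left_mono) auto
        also have "\<dots> \<le> \<bar>c0\<bar>" using t by (intro mult_left_le_one_le) auto
        finally show ?thesis .
      qed
      ultimately show "t *\<^sub>R x0 \<in> {x. g x \<le> ereal \<bar>c0\<bar>}" by simp
    qed
    show "sequentially \<noteq> bot" by simp
    have "((\<lambda>n. inverse (real (Suc n)) *\<^sub>R x0) \<longlongrightarrow> 0 *\<^sub>R x0) sequentially"
      by (rule continuous_on_tendsto_compose[OF lcs_scale_cont2[OF lcs] LIMSEQ_inverse_real_of_nat]) auto
    then show "((\<lambda>n. inverse (real (Suc n)) *\<^sub>R x0) \<longlongrightarrow> 0) sequentially" by simp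
  qed
  then have "g 0 \<noteq> \<infinity>" by auto
  then obtain a where a: "g 0 = ereal a" using ninf[of 0] by (cases "g 0") auto
  have "g ((2::real) *\<^sub>R 0) = ereal 2 * g 0" using sl unfolding sublinear_efun_def by (metis zero_less_numeral)
  then have "a = 2 * a" using a by simp
  then show ?thesis using a by (simp add: zero_ereal_def)
qed

lemma HB_geom:
  fixes g :: "'a::{real_vector,t2_space} \<Rightarrow> ereal"
  assumes lcs: "locally_convex_tvs TYPE('a)" and gG: "g \<in> Gamma" and sl: "sublinear_efun g"
    and gz: "g z > ereal r"
  shows "\<exists>y \<in> subdiff0 g. y z > r"
proof -
  have ninf: "g x \<noteq> -\<infinity>" for x using gG by (auto simp: Gamma_def proper_fun_def)
  have g0: "g 0 = 0" by (rule sublin_efun_g0[OF lcs gG sl])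
  have gadd: "g (x + y) \<le> g x + g y" for x y using sl by (simp add: sublinear_efun_def)
  have gscale: "g (t *\<^sub>R x) = ereal t * g x" if "t > 0" for t x
    using sl that by (simp add: sublinear_efun_def)
  have lsc: "closed {x. g x \<le> ereal c}" for c using gG by (simp add: Gamma_def lsc_fun_def)
  obtain r' where r': "r < r'" "ereal r' < g z" using ereal_dense2[OF gz] by auto
  define U1 where "U1 = - {x. g x \<le> ereal (-1)}"
  define U2 where "U2 = (\<lambda>w. w + z) -` (- {x. g x \<le> ereal r'})"
  have oU: "open (U1 \<inter> U2)" unfolding U1_def U2_def
    using lsc by (auto intro!: open_Int open_vimage_UNIV lcs_add_cont lcs simp: open_Compl)
  have zU: "0 \<in> U1 \<inter> U2" using g0 r' by (auto simp: U1_def U2_def)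
  obtain V0 where V0: "open V0" "convex V0" "0 \<in> V0" "V0 \<subseteq> U1 \<inter> U2"
    using lcs oU zU unfolding locally_convex_tvs_def by meson
  have V1: "ereal (-1) < g v" if "v \<in> V0" for v using V0(4) that by (auto simp: U1_def)
  have V2: "ereal r' < g (v + z)" if "v \<in> V0" for v using V0(4) that by (auto simp: U2_def)
  have V0scale: "s *\<^sub>R v \<in> V0" if "v \<in> V0" "0 \<le> s" "s \<le> 1" for s v
    using convexD[OF V0(2) that(1) V0(3), of s "1-s"] that by simp
  define W where "W = (\<lambda>w. (-1::real) *\<^sub>R w) -` V0"
  have Wn: "w \<in> W \<longleftrightarrow> - w \<in> V0" for w by (simp add: W_def)
  have oW: "open W" unfolding W_def by (intro open_vimage_UNIV lcs_scale_cont lcs V0)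
  have cW: "convex W"
  proof (rule convexI)
    fix x y :: 'a and u v :: real assume "x \<in> W" "y \<in> W" "0 \<le> u" "0 \<le> v" "u + v = 1"
    then have "u *\<^sub>R (-x) + v *\<^sub>R (-y) \<in> V0" using convexD[OF V0(2), of "-x" "-y" u v] by (simp add: Wn)
    then show "u *\<^sub>R x + v *\<^sub>R y \<in> W" by (simp add: Wn algebra_simps)
  qed
  have zW: "0 \<in> W" using V0(3) by (simp add: Wn)
  obtain a where a: "a > 0" "(1/a) *\<^sub>R z \<in> V0" using lcs_absorb2[OF lcs V0(1) V0(3)] by blast
  define M where "M = \<bar>r'\<bar> + a + 1"
  have M1: "M \<ge> 1" using a by (simp add: M_def)
  define Sw where "Sw w = {v. \<exists>u s c. s > 0 \<and> (1/s) *\<^sub>R (w - u) \<in> W \<and> g u = ereal c \<and> v = c + M * s}" for w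
  define q where "q w = Inf (Sw w)" for w
  have LB: "c > - (b + s)" if b: "b > 0" "(1/b) *\<^sub>R w \<in> V0" and s: "s > 0"
    and u: "(1/s) *\<^sub>R (w - u) \<in> W" and c: "g u = ereal c" for b w s u c
  proof -
    define p where "p = (b/(b+s)) *\<^sub>R ((1/b) *\<^sub>R w) + (s/(b+s)) *\<^sub>R (- ((1/s) *\<^sub>R (w - u)))"
    have bs: "b/(b+s) + s/(b+s) = 1" using b s by (simp add: add_divide_distrib[symmetric])
    have "p \<in> V0" unfolding p_def using b s u bs
      by (intro convexD[OF V0(2)]) (auto simp: Wn)
    have pu: "u = (b + s) *\<^sub>R p"
      using b s by (simp add: p_def algebra_simps scaleR_diff_right)
    have "ereal (-1) < g p" using V1[OF \<open>p \<in> V0\<close>] .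
    moreover have "g u = ereal (b + s) * g p" using gscale[of "b+s" p] b s pu by simp
    ultimately obtain cp where cp: "g p = ereal cp" "cp > -1" "c = (b + s) * cp"
      using c ninf[of p] b s by (cases "g p") (auto split: if_splits)
    have "(b + s) * cp > (b + s) * (-1)" using cp b s by (intro mult_strict_left_mono) auto
    then show ?thesis using cp by simp
  qed
  have Sne: "Sw w \<noteq> {}" for w
  proof -
    obtain t where t: "t > 0" "(1/t) *\<^sub>R w \<in> W" using lcs_absorb2[OF lcs oW zW] by blast
    then have "0 + M * t \<in> Sw w" unfolding Sw_def using g0
      by (intro CollectI exI[of _ 0] exI[of _ t] exI[of _ "0::real"]) (auto simp: zero_ereal_def)
    then show ?thesis by auto
  qed
  have Sbdd: "bdd_below (Sw w)" for w
  proof -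
    obtain b where b: "b > 0" "(1/b) *\<^sub>R w \<in> V0" using lcs_absorb2[OF lcs V0(1) V0(3)] by blast
    show ?thesis
    proof (rule bdd_belowI[where m = "-b"])
      fix v assume "v \<in> Sw w"
      then obtain u s c where us: "s > 0" "(1/s) *\<^sub>R (w - u) \<in> W" "g u = ereal c" "v = c + M * s"
        unfolding Sw_def by blast
      have "c > - (b + s)" using LB[OF b us(1,2,3)] .
      moreover have "M * s \<ge> s" using M1 us(1) by simp
      ultimately show "- b \<le> v" using us(4) by simp
    qed
  qed
  have qlow: "q w \<le> v" if "v \<in> Sw w" for v w unfolding q_def using that Sbdd by (rule cInf_lower)
  have qgr: "c \<le> q w" if "\<And>v. v \<in> Sw w \<Longrightarrow> c \<le> v" for c w unfolding q_def using Sne that by (rule cInf_greatest)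
  have Sadd: "q (x + y) \<le> v1 + v2" if hv: "v1 \<in> Sw x" "v2 \<in> Sw y" for x y v1 v2
  proof -
    obtain u1 s1 c1 where 1: "s1 > 0" "(1/s1) *\<^sub>R (x - u1) \<in> W" "g u1 = ereal c1" "v1 = c1 + M * s1"
      using hv(1) unfolding Sw_def by blast
    obtain u2 s2 c2 where 2: "s2 > 0" "(1/s2) *\<^sub>R (y - u2) \<in> W" "g u2 = ereal c2" "v2 = c2 + M * s2"
      using hv(2) unfolding Sw_def by blast
    have "g (u1 + u2) \<le> ereal (c1 + c2)" using gadd[of u1 u2] 1 2 by simp
    then obtain c12 where c12: "g (u1 + u2) = ereal c12" "c12 \<le> c1 + c2"
      using ninf[of "u1 + u2"] by (cases "g (u1 + u2)") auto
    have "(s1/(s1+s2)) *\<^sub>R ((1/s1) *\<^sub>R (x - u1)) + (s2/(s1+s2)) *\<^sub>R ((1/s2) *\<^sub>R (y - u2)) \<in> W"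
      using 1 2 by (intro convexD[OF cW]) (auto simp: add_divide_distrib[symmetric])
    moreover have "(s1/(s1+s2)) *\<^sub>R ((1/s1) *\<^sub>R (x - u1)) + (s2/(s1+s2)) *\<^sub>R ((1/s2) *\<^sub>R (y - u2))
        = (1/(s1+s2)) *\<^sub>R ((x + y) - (u1 + u2))"
      using 1 2 by (simp add: algebra_simps)
    ultimately have "c12 + M * (s1 + s2) \<in> Sw (x + y)"
      unfolding Sw_def using 1 2 c12 by (intro CollectI exI[of _ "u1 + u2"] exI[of _ "s1 + s2"] exI[of _ c12]) auto
    then have "q (x + y) \<le> c12 + M * (s1 + s2)" by (rule qlow)
    then show ?thesis using 1 2 c12 by (simp add: algebra_simps)
  qed
  have Sscale: "t * v \<in> Sw (t *\<^sub>R x)" if hv: "v \<in> Sw x" "t > 0" for v t x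
  proof -
    obtain u s c where 1: "s > 0" "(1/s) *\<^sub>R (x - u) \<in> W" "g u = ereal c" "v = c + M * s"
      using hv(1) unfolding Sw_def by blast
    have "(1/(t * s)) *\<^sub>R (t *\<^sub>R x - t *\<^sub>R u) = (1/s) *\<^sub>R (x - u)"
      using that(2) by (simp add: scaleR_diff_right[symmetric])
    moreover have "g (t *\<^sub>R u) = ereal (t * c)" using gscale[OF that(2)] 1 by simp
    moreover have "t * v = t * c + M * (t * s)" using 1 by (simp add: algebra_simps)
    ultimately show ?thesis unfolding Sw_def using 1 that(2)
      by (intro CollectI exI[of _ "t *\<^sub>R u"] exI[of _ "t * s"] exI[of _ "t * c"]) auto
  qed
  have qs: "sublin q"
    unfolding sublin_def
  proof (intro conjI allI impI)
    fix x y
    have "q (x + y) - q y \<le> q x"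
    proof (rule qgr)
      fix v1 assume v1: "v1 \<in> Sw x"
      have "q (x + y) - v1 \<le> q y"
        by (rule qgr) (use Sadd[OF v1] in force)
      then show "q (x + y) - q y \<le> v1" by simp
    qed
    then show "q (x + y) \<le> q x + q y" by simp
  next
    fix t :: real and x assume t: "t > 0"
    have "q (t *\<^sub>R x) / t \<le> q x"
    proof (rule qgr)
      fix v assume "v \<in> Sw x"
      then have "q (t *\<^sub>R x) \<le> t * v" using Sscale t qlow by blast
      then show "q (t *\<^sub>R x) / t \<le> v" using t by (simp add: field_simps)
    qed
    moreover have "q x * t \<le> q (t *\<^sub>R x)"
    proof (rule qgr)
      fix v assume "v \<in> Sw (t *\<^sub>R x)"
      then have "(1/t) * v \<in> Sw ((1/t) *\<^sub>R (t *\<^sub>R x))" using Sscale[of v "t *\<^sub>R x" "1/t"] t by simp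
      then have "q x \<le> (1/t) * v" using t qlow by simp
      then show "q x * t \<le> v" using t by (simp add: field_simps)
    qed
    ultimately show "q (t *\<^sub>R x) = t * q x" using t by (simp add: field_simps)
  qed
  have qg: "q w \<le> c" if "g w = ereal c" for w c
  proof (rule field_le_epsilon)
    fix e :: real assume e: "e > 0"
    have "c + M * (e / M) \<in> Sw w" unfolding Sw_def using that e M1 zW
      by (intro CollectI exI[of _ w] exI[of _ "e / M"] exI[of _ c]) auto
    then show "q w \<le> c + e" using qlow M1 by force
  qed
  have qW: "q w \<le> M" if "w \<in> W" for w
  proof -
    have "0 + M * 1 \<in> Sw w" unfolding Sw_def using that g0
      by (intro CollectI exI[of _ 0] exI[of _ "1::real"] exI[of _ "0::real"]) (auto simp: zero_ereal_def)
    then show ?thesis using qlow by force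
  qed
  have qz: "r' \<le> q z"
  proof (rule qgr)
    fix v assume "v \<in> Sw z"
    then obtain u s c where us: "s > 0" "(1/s) *\<^sub>R (z - u) \<in> W" "g u = ereal c" "v = c + M * s"
      unfolding Sw_def by blast
    show "r' \<le> v"
    proof (cases "s < 1")
      case True
      have "s *\<^sub>R (- ((1/s) *\<^sub>R (z - u))) \<in> V0"
        using us True by (intro V0scale) (auto simp: Wn)
      moreover have "s *\<^sub>R (- ((1/s) *\<^sub>R (z - u))) + z = u" using us by simp
      ultimately have "ereal r' < g u" using V2 by metis
      then have "r' < c" using us by simp
      moreover have "M * s \<ge> 0" using M1 us by simp
      ultimately show ?thesis using us by simp
    next
      case False
      have "c > - (a + s)" using LB[OF a us(1,2,3)] .
      moreover have "(M - 1) * s \<ge> (M - 1) * 1" using False M1 by (intro mult_left_mono) auto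
      ultimately show ?thesis using us by (simp add: M_def algebra_simps)
    qed
  qed
  obtain l where l: "linear l" "\<And>x. l x \<le> q x" "q z \<le> l z" using HB_analytic[OF qs, of z] by blast
  have "continuous_on UNIV l"
  proof (rule lcs_linear_cont[OF lcs l(1), of "W \<inter> V0" M])
    show "open (W \<inter> V0)" using oW V0 by auto
    show "0 \<in> W \<inter> V0" using zW V0 by auto
    fix w assume w: "w \<in> W \<inter> V0"
    have "l w \<le> M" using l(2)[of w] qW[of w] w by simp
    moreover have "l (- w) \<le> M" using l(2)[of "-w"] qW[of "-w"] w by (simp add: Wn)
    ultimately show "\<bar>l w\<bar> \<le> M" using linear_neg[OF l(1), of w] by simp
  qed
  then have "l \<in> topdual" using l(1) by (simp add: topdual_def)
  moreover have "ereal (l x) \<le> g x" for x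
  proof (cases "g x")
    case (real c)
    then show ?thesis using l(2)[of x] qg[of x c] by simp
  qed (use ninf in auto)
  ultimately have "l \<in> subdiff0 g" by (simp add: subdiff0_def)
  moreover have "l z > r" using l(3) qz r' by simp
  ultimately show ?thesis by blast
qed

lemma small_pos_le0:
  fixes X Y :: real
  assumes "\<And>s. 0 < s \<Longrightarrow> s < 1 \<Longrightarrow> 2 * s * X \<le> s\<^sup>2 * Y"
  shows "X \<le> 0"
proof (rule ccontr)
  assume X: "\<not> X \<le> 0"
  define s where "s = min (1/2) (X / (\<bar>Y\<bar> + 1))"
  have s: "0 < s" "s < 1" using X by (auto simp: s_def)
  have "2 * s * X \<le> s\<^sup>2 * Y" using assms s by blast
  then have "2 * X \<le> s * Y" using s by (simp add: power2_eq_square mult.assoc)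
  also have "s * Y \<le> s * \<bar>Y\<bar>" using s by (intro mult_left_mono) auto
  also have "s * \<bar>Y\<bar> \<le> (X / (\<bar>Y\<bar> + 1)) * \<bar>Y\<bar>" unfolding s_def by (intro mult_right_mono) auto
  also have "\<dots> \<le> X" using X by (simp add: field_simps)
  finally show False using X by simp
qed

lemma cont_fun_scale: "continuous_on UNIV (\<lambda>(f::'a \<Rightarrow> real) x. c * f x)"
  by (rule continuous_on_coordinatewise_then_product) (intro continuous_on_mult continuous_on_const continuous_on_product_coordinates)

lemma cont_fun_add: "continuous_on UNIV (\<lambda>(f::'a \<Rightarrow> real) x. f x + d x)"
  by (rule continuous_on_coordinatewise_then_product) (intro continuous_on_add continuous_on_const continuous_on_product_coordinates)

lemma fin_sep:
  fixes D :: "('a \<Rightarrow> real) set" and F :: "'a set" and p :: "'a \<Rightarrow> real"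
  assumes F: "finite F" and DZ: "\<And>f x. f \<in> D \<Longrightarrow> x \<notin> F \<Longrightarrow> f x = 0"
    and D0: "(\<lambda>x. 0) \<in> D"
    and Dc: "\<And>f c. f \<in> D \<Longrightarrow> c \<ge> 0 \<Longrightarrow> (\<lambda>x. c * f x) \<in> D"
    and Da: "\<And>f h. f \<in> D \<Longrightarrow> h \<in> D \<Longrightarrow> (\<lambda>x. f x + h x) \<in> D"
    and pQ: "p \<notin> closure D" and pZ: "\<And>x. x \<notin> F \<Longrightarrow> p x = 0"
  shows "\<exists>a. (\<forall>f\<in>D. (\<Sum>x\<in>F. a x * f x) \<le> 0) \<and> (\<Sum>x\<in>F. a x * p x) > 0"
proof -
  define Q where "Q = closure D"
  have cQ: "closed Q" by (simp add: Q_def)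
  define Z where "Z = (\<Inter>x\<in>-F. {f :: 'a \<Rightarrow> real. f x = 0})"
  have cZ: "closed Z" unfolding Z_def
    by (intro closed_INT ballI closed_Collect_eq continuous_on_product_coordinates continuous_on_const)
  have QZ: "Q \<subseteq> Z" unfolding Q_def using DZ by (intro closure_minimal cZ) (auto simp: Z_def)
  have Qc: "(\<lambda>x. c * f x) \<in> Q" if "f \<in> Q" "c \<ge> 0" for f c
  proof -
    have "(\<lambda>f x. c * f x) ` closure D \<subseteq> Q"
      using Dc that(2) closure_subset[of D] unfolding Q_def
      by (intro image_closure_subset continuous_on_subset[OF cont_fun_scale]) auto
    then show ?thesis using that(1) unfolding Q_def by auto
  qed
  have Qa: "(\<lambda>x. f x + d x) \<in> Q" if "f \<in> Q" "d \<in> D" for f d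
  proof -
    have "(\<lambda>f x. f x + d x) ` closure D \<subseteq> Q"
      using Da that(2) closure_subset[of D] unfolding Q_def
      by (intro image_closure_subset continuous_on_subset[OF cont_fun_add]) auto
    then show ?thesis using that(1) unfolding Q_def by auto
  qed
  define \<phi> where "\<phi> f = (\<Sum>x\<in>F. (f x - p x)\<^sup>2)" for f :: "'a \<Rightarrow> real"
  have cphi: "continuous_on UNIV \<phi>" unfolding \<phi>_def
    by (intro continuous_on_sum continuous_on_power continuous_on_diff continuous_on_product_coordinates continuous_on_const)
  define \<rho> where "\<rho> = sqrt (\<phi> (\<lambda>x. 0))"
  define B where "B = Pi UNIV (\<lambda>x. if x \<in> F then {p x - \<rho> .. p x + \<rho>} else {0::real})"
  have cB: "compact B"
  proof -
    have "compactin (product_topology (\<lambda>_. euclidean) UNIV) (PiE UNIV (\<lambda>x. if x \<in> F then {p x - \<rho> .. p x + \<rho>} else {0::real}))"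
      by (subst compactin_PiE) auto
    then show ?thesis unfolding B_def PiE_UNIV_domain euclidean_product_topology
      by simp
  qed
  have inB: "f \<in> B" if "f \<in> Z" "\<phi> f \<le> \<phi> (\<lambda>x. 0)" for f
  proof -
    have "\<bar>f x - p x\<bar> \<le> \<rho>" if "x \<in> F" for x
    proof -
      have "(f x - p x)\<^sup>2 \<le> \<phi> f" unfolding \<phi>_def
        by (rule member_le_sum[OF that]) (auto simp: F)
      then have "\<bar>f x - p x\<bar>\<^sup>2 \<le> \<phi> (\<lambda>x. 0)" using \<open>\<phi> f \<le> _\<close> by simp
      then show ?thesis unfolding \<rho>_def by (rule real_le_rsqrt)
    qed
    then show ?thesis using that(1) unfolding B_def Z_def by (force simp: abs_le_iff)
  qed
  have 0: "(\<lambda>x. 0) \<in> Q \<inter> B" using D0 closure_subset[of D] QZ inB unfolding Q_def by blast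
  obtain q0 where q0: "q0 \<in> Q \<inter> B" "\<And>f. f \<in> Q \<inter> B \<Longrightarrow> \<phi> q0 \<le> \<phi> f"
    using continuous_attains_inf[of "Q \<inter> B" \<phi>] cB cQ 0 continuous_on_subset[OF cphi]
    by (metis compact_Int_closed empty_iff inf_commute subset_UNIV)
  have qmin: "\<phi> q0 \<le> \<phi> f" if "f \<in> Q" for f
  proof (cases "\<phi> f \<le> \<phi> (\<lambda>x. 0)")
    case True
    then show ?thesis using q0 inB QZ that by blast
  next
    case False
    then show ?thesis using q0(2)[OF 0] by simp
  qed
  define a where "a x = p x - q0 x" for x
  have expand: "\<phi> (\<lambda>x. q0 x + s * h x) = \<phi> q0 - 2 * s * (\<Sum>x\<in>F. a x * h x) + s\<^sup>2 * (\<Sum>x\<in>F. (h x)\<^sup>2)" for s h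
  proof -
    have "(q0 x + s * h x - p x)\<^sup>2 = (q0 x - p x)\<^sup>2 - 2 * s * (a x * h x) + s\<^sup>2 * (h x)\<^sup>2" for x
      by (simp add: a_def power2_eq_square algebra_simps)
    then show ?thesis unfolding \<phi>_def
      by (simp add: sum.distrib sum_subtractf sum_distrib_left)
  qed
  have var: "(\<Sum>x\<in>F. a x * h x) \<le> 0" if "\<And>s. 0 < s \<Longrightarrow> s < 1 \<Longrightarrow> (\<lambda>x. q0 x + s * h x) \<in> Q" for h
  proof (rule small_pos_le0)
    fix s :: real assume s: "0 < s" "s < 1"
    have "\<phi> q0 \<le> \<phi> (\<lambda>x. q0 x + s * h x)" using qmin that s by blast
    then show "2 * s * (\<Sum>x\<in>F. a x * h x) \<le> s\<^sup>2 * (\<Sum>x\<in>F. (h x)\<^sup>2)" using expand by simp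
  qed
  have aD: "(\<Sum>x\<in>F. a x * f x) \<le> 0" if "f \<in> D" for f
  proof (rule var)
    fix s :: real assume "0 < s" "s < 1"
    then show "(\<lambda>x. q0 x + s * f x) \<in> Q" using Qa[OF _ Dc[OF that]] q0(1) by auto
  qed
  have aq: "(\<Sum>x\<in>F. a x * (- q0 x)) \<le> 0"
  proof (rule var)
    fix s :: real assume "0 < s" "s < 1"
    then have "(\<lambda>x. (1 - s) * q0 x) \<in> Q" using Qc q0(1) by auto
    then show "(\<lambda>x. q0 x + s * (- q0 x)) \<in> Q" by (simp add: algebra_simps)
  qed
  have phipos: "\<phi> q0 > 0"
  proof (rule ccontr)
    assume "\<not> \<phi> q0 > 0"
    then have "\<phi> q0 = 0" using sum_nonneg[of F "\<lambda>x. (q0 x - p x)\<^sup>2"] unfolding \<phi>_def by force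
    then have "\<forall>x\<in>F. (q0 x - p x)\<^sup>2 = 0" unfolding \<phi>_def using F by (subst sum_nonneg_eq_0_iff[symmetric]) auto
    moreover have "\<forall>x. x \<notin> F \<longrightarrow> q0 x = 0" using q0(1) QZ by (auto simp: Z_def)
    ultimately have "q0 = p" using pZ by (auto simp: fun_eq_iff)
    then show False using q0(1) pQ by (simp add: Q_def)
  qed
  have "(\<Sum>x\<in>F. a x * p x) = (\<Sum>x\<in>F. a x * a x) + (\<Sum>x\<in>F. a x * q0 x)"
    by (simp add: a_def sum.distrib[symmetric] algebra_simps)
  also have "(\<Sum>x\<in>F. a x * a x) = \<phi> q0" unfolding \<phi>_def a_def
    by (intro sum.cong) (auto simp: power2_eq_square algebra_simps)
  finally have "(\<Sum>x\<in>F. a x * p x) > 0" using aq phipos by (simp add: sum_negf)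
  then show ?thesis using aD by blast
qed

lemma td_lin: "f \<in> topdual \<Longrightarrow> linear f" by (simp add: topdual_def)

lemma td_comb:
  assumes "f \<in> topdual" "h \<in> topdual"
  shows "(\<lambda>x. a * f x + b * h x) \<in> topdual"
proof -
  have lf: "linear f" and lh: "linear h" using assms by (auto simp: topdual_def)
  have cf: "continuous_on UNIV f" and ch: "continuous_on UNIV h" using assms by (auto simp: topdual_def)
  have "linear (\<lambda>x. a * f x + b * h x)"
    by (rule linearI) (simp_all add: linear_add[OF lf] linear_add[OF lh] linear_scale[OF lf] linear_scale[OF lh] algebra_simps)
  moreover have "continuous_on UNIV (\<lambda>x. a * f x + b * h x)"
    by (intro continuous_on_add continuous_on_mult continuous_on_const cf ch)
  ultimately show ?thesis by (simp add: topdual_def)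
qed

lemma td_zero: "(\<lambda>x. 0) \<in> topdual"
proof -
  have "linear (\<lambda>x::'a. 0::real)" by (rule linearI) auto
  then show ?thesis by (simp add: topdual_def continuous_on_const)
qed

lemma S_conv:
  assumes "y1 \<in> subdiff0 g" "y2 \<in> subdiff0 g" "0 \<le> u" "u \<le> 1"
  shows "(\<lambda>x. u * y1 x + (1 - u) * y2 x) \<in> subdiff0 g"
proof -
  have "(\<lambda>x. u * y1 x + (1 - u) * y2 x) \<in> topdual" using assms by (intro td_comb) (auto simp: subdiff0_def)
  moreover have "ereal (u * y1 x + (1 - u) * y2 x) \<le> g x" for x
  proof (cases "g x")
    case (real c)
    have "y1 x \<le> c" "y2 x \<le> c" using assms(1,2) real by (auto simp: subdiff0_def dest!: spec[of _ x])
    then have "u * y1 x + (1 - u) * y2 x \<le> c" using assms(3,4) by (intro convex_bound_le) auto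
    then show ?thesis using real by simp
  next
    case PInf then show ?thesis by simp
  next
    case MInf
    then show ?thesis using assms(1) by (auto simp: subdiff0_def dest!: spec[of _ x])
  qed
  ultimately show ?thesis by (simp add: subdiff0_def)
qed

lemma sep_closure:
  fixes g :: "'a::{real_vector,t2_space} \<Rightarrow> ereal" and xs k :: "'a \<Rightarrow> real"
  assumes lcs: "locally_convex_tvs TYPE('a)" and gG: "g \<in> Gamma" and sl: "sublinear_efun g"
    and xsS: "xs \<in> subdiff0 g" and kt: "k \<in> topdual"
    and kC: "\<And>v. g v \<le> ereal (xs v) \<Longrightarrow> k v = 0"
  shows "k \<in> closure {(\<lambda>x. t * (y x - xs x)) | t y. t \<ge> 0 \<and> y \<in> subdiff0 g}"
proof (rule ccontr)
  define Kc where "Kc = {(\<lambda>x. t * (y x - xs x)) | t y. t \<ge> 0 \<and> y \<in> subdiff0 g}"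
  assume "k \<notin> closure {(\<lambda>x. t * (y x - xs x)) | t y. t \<ge> 0 \<and> y \<in> subdiff0 g}"
  then have "k \<notin> closure Kc" by (simp add: Kc_def)
  have KcI: "(\<lambda>x. t * (y x - xs x)) \<in> Kc" if "t \<ge> 0" "y \<in> subdiff0 g" for t y
    unfolding Kc_def using that by blast
  have KcE: "\<exists>t y. t \<ge> 0 \<and> y \<in> subdiff0 g \<and> j = (\<lambda>x. t * (y x - xs x))" if "j \<in> Kc" for j
    using that unfolding Kc_def by blast
  define U where "U = - closure Kc"
  have U: "open U" "k \<in> U" "U \<inter> Kc = {}"
    using \<open>k \<notin> closure Kc\<close> closure_subset[of Kc] by (auto simp: U_def)
  have "openin (product_topology (\<lambda>i. euclidean) UNIV) U" using U(1) by (simp add: open_fun_def)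
  from product_topology_open_contains_basis[OF this U(2)] obtain X where
    X: "k \<in> PiE UNIV X" "\<And>i. openin euclidean (X i)" "finite {i. X i \<noteq> topspace euclidean}" "PiE UNIV X \<subseteq> U"
    by meson
  define F where "F = {i. X i \<noteq> UNIV}"
  have F: "finite F" using X(3) by (simp add: F_def)
  define R where "R f = (\<lambda>x. if x \<in> F then f x else 0)" for f :: "'a \<Rightarrow> real"
  define D where "D = R ` Kc"
  have pD: "R k \<notin> closure D"
  proof
    assume kD: "R k \<in> closure D"
    define U' where "U' = (\<Inter>x\<in>F. (\<lambda>f. f x) -` X x)"
    have "open ((\<lambda>f::'a\<Rightarrow>real. f x) -` X x)" for x
    proof (rule open_vimage_UNIV)
      show "open (X x)" using X(2)[of x] by (simp only: open_openin)
    qed (rule continuous_on_product_coordinates)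
    then have oU': "open U'" unfolding U'_def using F by (intro open_INT ballI) 
    
    have "R k \<in> U'" using X(1) by (auto simp: U'_def R_def)
    moreover have "U' \<inter> D = {}"
    proof (rule ccontr)
      assume "U' \<inter> D \<noteq> {}"
      then obtain j where j: "j \<in> Kc" "R j \<in> U'" by (auto simp: D_def)
      have "j i \<in> X i" for i
      proof (cases "i \<in> F")
        case True
        then have "R j i \<in> X i" using j(2) unfolding U'_def by blast
        then show ?thesis using True by (simp add: R_def)
      next
        case False
        then show ?thesis by (simp add: F_def)
      qed
      then have "j \<in> PiE UNIV X" unfolding PiE_UNIV_domain by blast
      then show False using X(4) U(3) j(1) by blast
    qed
    ultimately show False using kD oU' open_Int_closure_eq_empty[OF oU', of D] by blast
  qed
  have D0: "(\<lambda>x. 0) \<in> D"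
  proof -
    have "(\<lambda>x. 0 * (xs x - xs x)) \<in> Kc" unfolding Kc_def using xsS by blast
    moreover have "R (\<lambda>x. 0 * (xs x - xs x)) = (\<lambda>x. 0)" by (simp add: R_def fun_eq_iff)
    ultimately show ?thesis unfolding D_def by (metis imageI)
  qed
  have Dc: "(\<lambda>x. c * f x) \<in> D" if hf: "f \<in> D" "c \<ge> 0" for f c
  proof -
    obtain j where j: "j \<in> Kc" "f = R j" using hf(1) unfolding D_def by blast
    obtain t y where ty: "t \<ge> 0" "y \<in> subdiff0 g" "f = R (\<lambda>x. t * (y x - xs x))"
      using KcE[OF j(1)] j(2) by blast
    have "(\<lambda>x. (c * t) * (y x - xs x)) \<in> Kc" using ty hf(2) by (intro KcI) auto
    moreover have "(\<lambda>x. c * f x) = R (\<lambda>x. (c * t) * (y x - xs x))" using ty by (simp add: R_def fun_eq_iff)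
    ultimately show ?thesis by (simp add: D_def)
  qed
  have Da: "(\<lambda>x. f x + h x) \<in> D" if hf: "f \<in> D" "h \<in> D" for f h
  proof -
    obtain j1 where j1: "j1 \<in> Kc" "f = R j1" using hf(1) unfolding D_def by blast
    obtain t1 y1 where 1: "t1 \<ge> 0" "y1 \<in> subdiff0 g" "f = R (\<lambda>x. t1 * (y1 x - xs x))"
      using KcE[OF j1(1)] j1(2) by blast
    obtain j2 where j2: "j2 \<in> Kc" "h = R j2" using hf(2) unfolding D_def by blast
    obtain t2 y2 where 2: "t2 \<ge> 0" "y2 \<in> subdiff0 g" "h = R (\<lambda>x. t2 * (y2 x - xs x))"
      using KcE[OF j2(1)] j2(2) by blast
    show ?thesis
    proof (cases "t1 + t2 = 0")
      case True
      then have "t1 = 0" "t2 = 0" using 1 2 by auto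
      then have "(\<lambda>x. f x + h x) = (\<lambda>x. 0)" using 1 2 by (simp add: R_def fun_eq_iff)
      then show ?thesis using D0 by simp
    next
      case False
      then have tp: "t1 + t2 > 0" using 1 2 by auto
      define u where "u = t1 / (t1 + t2)"
      have u: "0 \<le> u" "u \<le> 1" using 1 2 tp by (auto simp: u_def field_simps)
      define y where "y = (\<lambda>x. u * y1 x + (1 - u) * y2 x)"
      have yS: "y \<in> subdiff0 g" unfolding y_def using S_conv[OF 1(2) 2(2) u] .
      have "(\<lambda>x. (t1 + t2) * (y x - xs x)) \<in> Kc" using yS tp by (intro KcI) auto
      moreover have "(\<lambda>x. f x + h x) = R (\<lambda>x. (t1 + t2) * (y x - xs x))"
      proof -
        have uu: "(t1 + t2) * u = t1" "(t1 + t2) * (1 - u) = t2" using tp by (simp_all add: u_def field_simps)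
        have "(t1 + t2) * (y x - xs x) = t1 * (y1 x - xs x) + t2 * (y2 x - xs x)" for x
        proof -
          have "(t1 + t2) * (y x - xs x) = ((t1 + t2) * u) * y1 x + ((t1 + t2) * (1 - u)) * y2 x - (t1 + t2) * xs x"
            by (simp add: y_def algebra_simps)
          then show ?thesis unfolding uu by (simp add: algebra_simps)
        qed
        then show ?thesis using 1 2 by (simp add: R_def fun_eq_iff)
      qed
      ultimately show ?thesis by (simp add: D_def)
    qed
  qed
  have DZ: "f x = 0" if "f \<in> D" "x \<notin> F" for f x using that by (auto simp: D_def R_def)
  obtain a where a: "\<And>f. f \<in> D \<Longrightarrow> (\<Sum>x\<in>F. a x * f x) \<le> 0" "(\<Sum>x\<in>F. a x * R k x) > 0"
  proof -
    have "\<exists>a. (\<forall>f\<in>D. (\<Sum>x\<in>F. a x * f x) \<le> 0) \<and> (\<Sum>x\<in>F. a x * R k x) > 0"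
      apply (rule fin_sep[of F D "R k"])
            apply (rule F)
           apply (erule DZ, assumption)
          apply (rule D0)
         apply (erule Dc, assumption)
        apply (erule Da, assumption)
       apply (rule pD)
      apply (simp add: R_def)
      done
    then show ?thesis using that by blast
  qed
  define v where "v = (\<Sum>x\<in>F. a x *\<^sub>R x)"
  have ev: "f v = (\<Sum>x\<in>F. a x * f x)" if "linear f" for f
    unfolding v_def using that by (simp add: linear_sum linear_scale)
  have yv: "y v \<le> xs v" if "y \<in> subdiff0 g" for y
  proof -
    have "(\<lambda>x. 1 * (y x - xs x)) \<in> Kc" using that by (intro KcI) auto
    then have "R (\<lambda>x. 1 * (y x - xs x)) \<in> D" by (simp add: D_def)
    from a(1)[OF this] have "(\<Sum>x\<in>F. a x * (y x - xs x)) \<le> 0" by (simp add: R_def)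
    moreover have "(\<Sum>x\<in>F. a x * (y x - xs x)) = y v - xs v"
      using ev[of y] ev[of xs] that xsS
      by (simp add: td_lin subdiff0_def right_diff_distrib sum_subtractf)
    ultimately show ?thesis by simp
  qed
  have "g v \<le> ereal (xs v)"
  proof (rule ccontr)
    assume "\<not> g v \<le> ereal (xs v)"
    then have "g v > ereal (xs v)" by simp
    from HB_geom[OF lcs gG sl this] obtain y where "y \<in> subdiff0 g" "y v > xs v" by blast
    then show False using yv by (meson not_le)
  qed
  then have "k v = 0" by (rule kC)
  moreover have "k v = (\<Sum>x\<in>F. a x * R k x)" using ev[of k] kt by (simp add: td_lin R_def)
  ultimately show False using a(2) by simp
qed


theorem proposition5:
  fixes g :: "'a::{real_vector,t2_space} \<Rightarrow> ereal" and xs :: "'a \<Rightarrow> real"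
  assumes "locally_convex_tvs TYPE('a)"
    and "\<exists>x::'a. x \<noteq> 0"
    and "g \<in> Gamma" and "sublinear_efun g"
    and "xs \<in> topdual"
  shows "(xs \<in> qri (subdiff0 g) \<longleftrightarrow> subspace (le_set g xs))
    \<and> (subspace (le_set g xs) \<longleftrightarrow> Lset g xs = le_set g xs)
    \<and> (subspace (le_set g xs) \<longleftrightarrow> xs \<in> subdiff0 g \<and> subspace (eq_set g xs))
    \<and> (xs \<in> subdiff0 g \<and> subspace (eq_set g xs) \<longleftrightarrow> xs \<in> subdiff0 g \<and> Lset g xs = eq_set g xs)"
proof -
  note lcs = assms(1) and gG = assms(3) and sl = assms(4) and xst = assms(5)
  have ninf: "g x \<noteq> -\<infinity>" for x using gG by (auto simp: Gamma_def proper_fun_def)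
  have g0: "g 0 = 0" by (rule sublin_efun_g0[OF lcs gG sl])
  have gadd: "g (x + y) \<le> g x + g y" for x y using sl by (simp add: sublinear_efun_def)
  have gscale: "g (t *\<^sub>R x) = ereal t * g x" if "t > 0" for t x
    using sl that by (simp add: sublinear_efun_def)
  have xl: "linear xs" using xst by (rule td_lin)
  have xneg: "xs (- x) = - xs x" for x using linear_neg[OF xl] .
  define S where "S = subdiff0 g"
  define C where "C = le_set g xs"
  define E where "E = eq_set g xs"
  define L where "L = Lset g xs"
  have inC: "x \<in> C \<longleftrightarrow> g x \<le> ereal (xs x)" for x by (simp add: C_def le_set_def)
  have inE: "x \<in> E \<longleftrightarrow> g x = ereal (xs x)" for x by (simp add: E_def eq_set_def)
  have inL: "x \<in> L \<longleftrightarrow> g x = ereal (xs x) \<and> g (- x) = ereal (- xs x)" for x by (simp add: L_def Lset_def)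
  have inS: "y \<in> S \<longleftrightarrow> y \<in> topdual \<and> (\<forall>x. ereal (y x) \<le> g x)" for y by (simp add: S_def subdiff0_def)
  have LC: "L \<subseteq> C" by (auto simp: inL inC)
  have CL: "C \<subseteq> L" if sC: "subspace C"
  proof
    fix x assume x: "x \<in> C"
    have mx: "- x \<in> C" using subspace_neg[OF sC x] .
    have a: "g x \<le> ereal (xs x)" "g (-x) \<le> ereal (- xs x)" using x mx by (auto simp: inC xneg)
    obtain c1 where c1: "g x = ereal c1" using a(1) ninf[of x] by (cases "g x") auto
    obtain c2 where c2: "g (-x) = ereal c2" using a(2) ninf[of "-x"] by (cases "g (-x)") auto
    have "g 0 \<le> g x + g (-x)" using gadd[of x "-x"] by simp
    then have "0 \<le> c1 + c2" using c1 c2 g0 by (simp add: zero_ereal_def)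
    then show "x \<in> L" using a c1 c2 by (simp add: inL)
  qed
  have Cpos: "c *\<^sub>R x \<in> C" if "x \<in> C" "c > 0" for c x
  proof -
    have "g (c *\<^sub>R x) = ereal c * g x" using gscale[OF that(2)] .
    also have "\<dots> \<le> ereal c * ereal (xs x)" using that by (intro ereal_mult_left_mono) (auto simp: inC)
    finally show ?thesis by (simp add: inC linear_scale[OF xl])
  qed
  have LsubC: "subspace C" if LCe: "L = C"
  proof (rule subspaceI)
    show "0 \<in> C" using g0 linear_0[OF xl] by (simp add: inC zero_ereal_def)
  next
    fix x y assume "x \<in> C" "y \<in> C"
    then have "g x + g y \<le> ereal (xs x) + ereal (xs y)" by (intro add_mono) (auto simp: inC)
    then show "x + y \<in> C" using gadd[of x y] by (simp add: inC linear_add[OF xl])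
  next
    fix c :: real and x assume x: "x \<in> C"
    consider "c > 0" | "c = 0" | "c < 0" by linarith
    then show "c *\<^sub>R x \<in> C"
    proof cases
      case 1 then show ?thesis using Cpos x by blast
    next
      case 2 then show ?thesis using g0 linear_0[OF xl] by (simp add: inC zero_ereal_def)
    next
      case 3
      have "x \<in> L" using x LCe by simp
      then have "- x \<in> L" by (simp add: inL xneg)
      then have "- x \<in> C" using LC by blast
      then have "(- c) *\<^sub>R (- x) \<in> C" using Cpos[of "- x" "- c"] 3 by linarith
      then show ?thesis by simp
    qed
  qed
  have CS: "xs \<in> S" if sC: "subspace C"
  proof -
    have "ereal (xs x) \<le> g x" for x
    proof (rule ccontr)
      assume "\<not> ereal (xs x) \<le> g x"
      then have "g x \<le> ereal (xs x)" "g x \<noteq> ereal (xs x)" by auto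
      then show False using CL[OF sC] by (auto simp: inC inL)
    qed
    then show ?thesis using xst by (simp add: inS)
  qed
  have EC: "E = C" if "xs \<in> S"
  proof -
    have "ereal (xs x) \<le> g x" for x using that by (simp add: inS)
    then have "g x \<le> ereal (xs x) \<longleftrightarrow> g x = ereal (xs x)" for x by (metis order.antisym order.refl)
    then show ?thesis by (auto simp: inE inC)
  qed
  define Kc where "Kc = {(\<lambda>x. t * (y x - xs x)) | t y. t \<ge> 0 \<and> y \<in> S}"
  have qri_eq: "xs \<in> qri S \<longleftrightarrow> xs \<in> S \<and> fun_subspace (topdual \<inter> closure Kc)"
    by (simp add: qri_def wstar_closure_def Kc_def)
  have KcI: "(\<lambda>x. t * (y x - xs x)) \<in> Kc" if "t \<ge> 0" "y \<in> S" for t y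
    unfolding Kc_def using that by blast
  have KcE: "\<exists>t y. t \<ge> 0 \<and> y \<in> S \<and> j = (\<lambda>x. t * (y x - xs x))" if "j \<in> Kc" for j
    using that unfolding Kc_def by blast
  have P1: "xs \<in> qri S \<longleftrightarrow> subspace C"
  proof
    assume "xs \<in> qri S"
    then have xsS: "xs \<in> S" and fs: "fun_subspace (topdual \<inter> closure Kc)" using qri_eq by auto
    have "C \<subseteq> L"
    proof
      fix x assume x: "x \<in> C"
      have "x \<in> E" using x EC[OF xsS] by simp
      then have gx: "g x = ereal (xs x)" by (simp add: inE)
      have ge: "ereal (xs (- x)) \<le> g (- x)" using xsS by (simp add: inS)
      have "g (- x) = ereal (- xs x)"
      proof (rule ccontr)
        assume "g (- x) \<noteq> ereal (- xs x)"
        then have "g (- x) > ereal (- xs x)" using ge xneg[of x] by simp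
        from HB_geom[OF lcs gG sl this] obtain y where y: "y \<in> S" "y (- x) > - xs x"
          unfolding S_def by blast
        have yl: "linear y" using y(1) by (simp add: inS td_lin)
        have yx: "y x < xs x" using y(2) linear_neg[OF yl, of x] by simp
        define j where "j = (\<lambda>w. 1 * (y w - xs w))"
        have "j \<in> Kc" unfolding j_def using y(1) by (intro KcI) auto
        moreover have "j \<in> topdual"
        proof -
          have "(\<lambda>w. 1 * y w + (-1) * xs w) \<in> topdual" using y(1) xst by (intro td_comb) (auto simp: inS)
          moreover have "(\<lambda>w. 1 * y w + (-1) * xs w) = j" by (simp add: j_def fun_eq_iff)
          ultimately show ?thesis by simp
        qed
        ultimately have "j \<in> topdual \<inter> closure Kc" using closure_subset[of Kc] by auto
        then have "(\<lambda>w. (-1) * j w) \<in> topdual \<inter> closure Kc" using fs unfolding fun_subspace_def by blast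
        then have mj: "(\<lambda>w. (-1) * j w) \<in> closure Kc" by simp
        have "closure Kc \<subseteq> {f. f x \<le> 0}"
        proof (rule closure_minimal)
          show "Kc \<subseteq> {f. f x \<le> 0}"
          proof
            fix f assume "f \<in> Kc"
            then obtain t y' where ty: "t \<ge> 0" "y' \<in> S" "f = (\<lambda>x. t * (y' x - xs x))" using KcE by blast
            have "ereal (y' x) \<le> g x" using ty(2) by (simp add: inS)
            then have "y' x \<le> xs x" using gx by simp
            then show "f \<in> {f. f x \<le> 0}" using ty by (simp add: mult_nonneg_nonpos)
          qed
          show "closed {f :: 'a \<Rightarrow> real. f x \<le> 0}"
            by (intro closed_Collect_le continuous_on_product_coordinates continuous_on_const)
        qed
        then have "- j x \<le> 0" using mj by auto
        then show False using yx by (simp add: j_def)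
      qed
      then show "x \<in> L" using gx by (simp add: inL)
    qed
    then show "subspace C" using LC LsubC by blast
  next
    assume sC: "subspace C"
    have xsS: "xs \<in> S" using CS[OF sC] .
    have CLe: "C = L" using CL[OF sC] LC by blast
    define Cp where "Cp = {k \<in> topdual. \<forall>x\<in>C. k x = 0}"
    have "topdual \<inter> closure Kc = Cp"
    proof
      show "topdual \<inter> closure Kc \<subseteq> Cp"
      proof
        fix k assume k: "k \<in> topdual \<inter> closure Kc"
        have "k x = 0" if x: "x \<in> C" for x
        proof -
          have xL: "g x = ereal (xs x)" "g (- x) = ereal (- xs x)" using x CLe by (auto simp: inL)
          have "closure Kc \<subseteq> {f. f x = 0}"
          proof (rule closure_minimal)
            show "Kc \<subseteq> {f. f x = 0}"
            proof
              fix f assume "f \<in> Kc"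
              then obtain t y' where ty: "t \<ge> 0" "y' \<in> S" "f = (\<lambda>x. t * (y' x - xs x))" using KcE by blast
              have yl: "linear y'" using ty(2) by (simp add: inS td_lin)
              have "ereal (y' x) \<le> g x" "ereal (y' (- x)) \<le> g (- x)" using ty(2) by (auto simp: inS)
              then have "y' x \<le> xs x" "- y' x \<le> - xs x" using xL linear_neg[OF yl, of x] by auto
              then show "f \<in> {f. f x = 0}" using ty by simp
            qed
            show "closed {f :: 'a \<Rightarrow> real. f x = 0}"
              by (intro closed_Collect_eq continuous_on_product_coordinates continuous_on_const)
          qed
          then show ?thesis using k by auto
        qed
        then show "k \<in> Cp" using k by (simp add: Cp_def)
      qed
    next
      show "Cp \<subseteq> topdual \<inter> closure Kc"
      proof
        fix k assume k: "k \<in> Cp"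
        have "k \<in> closure {(\<lambda>x. t * (y x - xs x)) | t y. t \<ge> 0 \<and> y \<in> subdiff0 g}"
        proof (rule sep_closure[OF lcs gG sl])
          show "xs \<in> subdiff0 g" using xsS by (simp add: S_def)
          show "k \<in> topdual" using k by (simp add: Cp_def)
          fix v assume "g v \<le> ereal (xs v)"
          then show "k v = 0" using k by (simp add: Cp_def inC)
        qed
        then show "k \<in> topdual \<inter> closure Kc" using k by (simp add: Cp_def Kc_def S_def)
      qed
    qed
    moreover have "fun_subspace Cp"
      unfolding fun_subspace_def
    proof (intro conjI ballI allI)
      show "(\<lambda>x. 0) \<in> Cp" using td_zero by (simp add: Cp_def)
    next
      fix f h assume "f \<in> Cp" "h \<in> Cp"
      then have "(\<lambda>x. 1 * f x + 1 * h x) \<in> topdual" by (intro td_comb) (auto simp: Cp_def)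
      then show "(\<lambda>x. f x + h x) \<in> Cp" using \<open>f \<in> Cp\<close> \<open>h \<in> Cp\<close> by (simp add: Cp_def)
    next
      fix c :: real and f assume "f \<in> Cp"
      then have "(\<lambda>x. c * f x + 0 * f x) \<in> topdual" by (intro td_comb) (auto simp: Cp_def)
      then show "(\<lambda>x. c * f x) \<in> Cp" using \<open>f \<in> Cp\<close> by (simp add: Cp_def)
    qed
    ultimately show "xs \<in> qri S" using qri_eq xsS by simp
  qed
  have P2: "subspace C \<longleftrightarrow> L = C" using CL LC LsubC by blast
  have P3: "subspace C \<longleftrightarrow> xs \<in> S \<and> subspace E" using CS EC by metis
  have P4: "xs \<in> S \<and> subspace E \<longleftrightarrow> xs \<in> S \<and> L = E" using EC P2 by metis
  show ?thesis using P1 P2 P3 P4 by (simp add: S_def C_def E_def L_def)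
qed

end
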